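(* Let $\mathbf{M}\in\mathbb{R}^{N\times N}$ be symmetric with eigenvalues $\lambda_1>\lambda_2\ge\lambda_3\ge\cdots\ge\lambda_N$, and let $g(\bm{x})=-\tfrac12\bm{x}^\top\mathbf{M}\bm{x}$ be restricted to the unit sphere $\mathbb{S}^{N-1}$. Set $\epsilon=0.2(\lambda_1-\lambda_2)$ and $\eta=0.3(\lambda_1-\lambda_2)$. Then for every $\bm{x}\in\mathbb{S}^{N-1}$ with $\|\mathrm{grad}\,g(\bm{x})\|_2\le\epsilon$ we have $|\lambda_{\min}(\mathrm{hess}\,g(\bm{x}))|\ge\eta$.
   Context: $\mathbb{S}^{N-1}=\{\bm{x}\in\mathbb{R}^N:\|\bm{x}\|_2=1\}$. The Riemannian gradient and Hessian of $g$ on the sphere are $\mathrm{grad}\,g(\bm{x})=(\bm{x}\bm{x}^\top-\mathbf{I}_N)\mathbf{M}\bm{x}$ and $\mathrm{hess}\,g(\bm{x})=(\mathbf{I}_N-\bm{x}\bm{x}^\top)(\bm{x}^\top\mathbf{M}\bm{x}\,\mathbf{I}_N-\mathbf{M})(\mathbf{I}_N-\bm{x}\bm{x}^\top)$, the latter regarded as a quadratic form on the tangent space $\mathcal{T}_{\bm{x}}\mathbb{S}^{N-1}=\{\bm{u}\in\mathbb{R}^N:\bm{x}^\top\bm{u}=0\}$; thus $\lambda_{\min}(\mathrm{hess}\,g(\bm{x}))=\min\{\bm{u}^\top\mathrm{hess}\,g(\bm{x})\bm{u}:\bm{u}\in\mathcal{T}_{\bm{x}}\mathbb{S}^{N-1},\|\bm{u}\|_2=1\}=\min\{\bm{x}^\top\mathbf{M}\bm{x}-\bm{u}^\top\mathbf{M}\bm{u}:\bm{x}^\top\bm{u}=0,\|\bm{u}\|_2=1\}$.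 *)

theory Defs
  imports "Jordan_Normal_Form.Char_Poly"
begin

definition outer_vec :: "real vec \<Rightarrow> real mat" where
  "outer_vec x = mat (dim_vec x) (dim_vec x) (\<lambda>(i,j). x $ i * x $ j)"

text \<open>Riemannian gradient of g(x) = -1/2 x^T M x on the sphere: (x x^T - I) M x.\<close>
definition sphere_grad :: "real mat \<Rightarrow> real vec \<Rightarrow> real vec" where
  "sphere_grad M x = (outer_vec x - 1\<^sub>m (dim_vec x)) *\<^sub>v (M *\<^sub>v x)"

definition sphere_hess :: "real mat \<Rightarrow> real vec \<Rightarrow> real mat" where
  "sphere_hess M x =
     (let n = dim_vec x; P = 1\<^sub>m n - outer_vec x
      in P * ((x \<bullet> (M *\<^sub>v x)) \<cdot>\<^sub>m 1\<^sub>m n - M) * P)"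

text \<open>Smallest eigenvalue of the Hessian regarded as a quadratic form on the tangent space.\<close>
definition lambda_min_hess :: "real mat \<Rightarrow> real vec \<Rightarrow> real" where
  "lambda_min_hess M x =
     Inf {u \<bullet> (sphere_hess M x *\<^sub>v u) | u. u \<in> carrier_vec (dim_vec x) \<and> x \<bullet> u = 0 \<and> u \<bullet> u = 1}"

definition vnorm :: "real vec \<Rightarrow> real" where
  "vnorm x = sqrt (x \<bullet> x)"

end

theory Submission
  imports Defs "Jordan_Normal_Form.Schur_Decomposition"
begin


lemma conj_real_vec[simp]: "conjugate (v :: real vec) = v"
  by (rule eq_vecI, auto simp: conjugate_vec_def)

lemma sq_ge0: "(v::real vec) \<bullet> v \<ge> 0"
  using conjugate_square_ge_0_vec[of v] by simp

lemma sq_eq0: "(v::real vec) \<in> carrier_vec n \<Longrightarrow> v \<bullet> v = 0 \<longleftrightarrow> v = 0\<^sub>v n"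
  using conjugate_square_eq_0_vec[of v n] by simp

lemma cauchy_schwarz:
  fixes v w :: "real vec"
  assumes v: "v \<in> carrier_vec n" and w: "w \<in> carrier_vec n"
  shows "(v \<bullet> w)^2 \<le> (v \<bullet> v) * (w \<bullet> w)"
proof (cases "w \<bullet> w = 0")
  case True
  then have "w = 0\<^sub>v n" using sq_eq0[OF w] by simp
  then show ?thesis using v by simp
next
  case False
  then have wp: "w \<bullet> w > 0" using sq_ge0[of w] by simp
  let ?z = "(w \<bullet> w) \<cdot>\<^sub>v v - (v \<bullet> w) \<cdot>\<^sub>v w"
  have "0 \<le> ?z \<bullet> ?z" by (rule sq_ge0)
  also have "?z \<bullet> ?z = (w \<bullet> w) * ((w \<bullet> w) * (v \<bullet> v) - (v \<bullet> w)^2)"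
    using v w by (simp add: minus_scalar_prod_distrib scalar_prod_minus_distrib comm_scalar_prod[of w n v] power2_eq_square algebra_simps)
  finally show ?thesis using wp by (simp add: zero_le_mult_iff mult.commute)
qed

lemma ortho_complete:
  fixes v :: "real vec"
  assumes v: "v \<in> carrier_vec n" and v1: "v \<bullet> v = 1"
  shows "\<exists>W \<in> carrier_mat n n. transpose_mat W * W = 1\<^sub>m n \<and> W * transpose_mat W = 1\<^sub>m n \<and> col W 0 = v \<and> 0 < n"
proof -
  have v0: "v \<noteq> 0\<^sub>v n" using v1 v by auto
  have n: "0 < n"
  proof (rule ccontr)
    assume "\<not> 0 < n" then have "n = 0" by simp
    then have "v \<bullet> v = 0" using v by (simp add: scalar_prod_def)
    then show False using v1 by simp
  qed
  interpret cof_vec_space n "TYPE(real)" .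
  define b where "b = basis_completion v"
  from basis_completion[OF v v0, folded b_def]
  have dist_b: "distinct b" and indep: "\<not> lin_dep (set b)" and b: "set b \<subseteq> carrier_vec n"
    and hdb: "hd b = v" and len_b: "length b = n" by auto
  from hdb len_b n obtain vs where bv: "b = v # vs" by (cases b, auto)
  define ws where "ws = gram_schmidt n b"
  from gram_schmidt_result[OF b dist_b indep refl, folded ws_def]
  have ws: "set ws \<subseteq> carrier_vec n" "corthogonal ws" "length ws = n"
    by (auto simp: len_b)
  from gram_schmidt_hd[OF v, of vs, folded bv] have hdws: "hd ws = v" unfolding ws_def .
  have ws0: "ws ! 0 = v" using hdws n ws(3) by (cases ws, auto)
  define us where "us = map (\<lambda>w. (1 / sqrt (w \<bullet> w)) \<cdot>\<^sub>v w) ws"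
  have lus: "length us = n" using ws by (simp add: us_def)
  have wsc: "i < n \<Longrightarrow> ws ! i \<in> carrier_vec n" for i using ws by auto
  have usc: "i < n \<Longrightarrow> us ! i \<in> carrier_vec n" for i using wsc ws by (simp add: us_def)
  have worth: "i < n \<Longrightarrow> j < n \<Longrightarrow> (ws ! i \<bullet> ws ! j = 0) = (i \<noteq> j)" for i j
    using corthogonalD[OF ws(2), of i j] ws(3) by simp
  have orth: "us ! i \<bullet> us ! j = (if i = j then 1 else 0)" if i: "i < n" and j: "j < n" for i j
  proof -
    have eq: "us ! i \<bullet> us ! j = (1 / sqrt (ws!i \<bullet> ws!i)) * (1 / sqrt (ws!j \<bullet> ws!j)) * (ws ! i \<bullet> ws ! j)"
      using i j ws wsc[OF i] wsc[OF j] by (simp add: us_def)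
    show ?thesis
    proof (cases "i = j")
      case True
      have "ws!i \<bullet> ws!i > 0" using worth[OF i i] sq_ge0[of "ws!i"] by simp
      then show ?thesis using eq True by (simp add: field_simps)
    next
      case False
      then show ?thesis using eq worth[OF i j] by simp
    qed
  qed
  define W where "W = mat_of_cols n us"
  have W: "W \<in> carrier_mat n n" using lus by (simp add: W_def mat_of_cols_carrier(1)[of n us, unfolded lus])
  have colW: "i < n \<Longrightarrow> col W i = us ! i" for i unfolding W_def using lus usc by simp
  have WW: "transpose_mat W * W = 1\<^sub>m n"
  proof (rule eq_matI)
    fix i j assume "i < dim_row (1\<^sub>m n)" "j < dim_col (1\<^sub>m n)"
    then have i: "i < n" and j: "j < n" by auto
    show "(transpose_mat W * W) $$ (i, j) = 1\<^sub>m n $$ (i, j)"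
      using W i j by (simp add: colW orth)
  qed (use W in auto)
  have WW2: "W * transpose_mat W = 1\<^sub>m n"
    by (rule mat_mult_left_right_inverse[OF _ W WW], use W in auto)
  have "col W 0 = v"
    using colW[OF n] ws0 n ws v1 by (simp add: us_def)
  then show ?thesis using W WW WW2 n by blast
qed


lemma compress:
  fixes A :: "real mat" and v :: "real vec"
  assumes A: "A \<in> carrier_mat n n" and sym: "transpose_mat A = A"
    and v: "v \<in> carrier_vec n" and v1: "v \<bullet> v = 1" and ev: "A *\<^sub>v v = e \<cdot>\<^sub>v v"
    and cp: "char_poly A = [:-e,1:] * q"
  shows "\<exists>A3 \<in> carrier_mat (n-1) (n-1). transpose_mat A3 = A3 \<and> char_poly A3 = q \<and>
     (\<forall>z\<in>carrier_vec n. z \<bullet> v = 0 \<longrightarrow> (\<exists>w \<in> carrier_vec (n-1). w \<bullet> w = z \<bullet> z \<and> z \<bullet> (A *\<^sub>v z) = w \<bullet> (A3 *\<^sub>v w)))"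
proof -
  obtain W where W: "W \<in> carrier_mat n n" and WW: "transpose_mat W * W = 1\<^sub>m n"
    and WW2: "W * transpose_mat W = 1\<^sub>m n" and colW0: "col W 0 = v" and n: "0 < n"
    using ortho_complete[OF v v1] by blast
  define m where "m = n - 1"
  have nm: "n = Suc m" using n m_def by simp
  have WT: "transpose_mat W \<in> carrier_mat n n" using W by simp
  define A' where "A' = transpose_mat W * (A * W)"
  have AW: "A * W \<in> carrier_mat n n" using A W by simp
  have A': "A' \<in> carrier_mat n n" using AW WT by (simp add: A'_def)
  have orth: "i < n \<Longrightarrow> j < n \<Longrightarrow> col W i \<bullet> col W j = (if i = j then 1 else 0)" for i j
    using arg_cong[OF WW, of "\<lambda>M. M $$ (i,j)"] W by simp
  have entry: "i < n \<Longrightarrow> j < n \<Longrightarrow> A' $$ (i,j) = col W i \<bullet> (A *\<^sub>v col W j)" for i j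
    unfolding A'_def using W A by (simp add: mult_mat_vec_def)
  have symA': "transpose_mat A' = A'"
  proof -
    have "transpose_mat A' = transpose_mat (A * W) * W"
      unfolding A'_def using transpose_mult[OF WT AW] by simp
    also have "\<dots> = transpose_mat W * A * W"
      using transpose_mult[OF A W] sym by simp
    also have "\<dots> = A'" unfolding A'_def using WT A W by (simp add: assoc_mult_mat)
    finally show ?thesis .
  qed
  have symE: "i < n \<Longrightarrow> j < n \<Longrightarrow> A' $$ (i,j) = A' $$ (j,i)" for i j
    using arg_cong[OF symA', of "\<lambda>M. M $$ (j,i)"] A' by simp
  have col0: "i < n \<Longrightarrow> A' $$ (i,0) = (if i = 0 then e else 0)" for i
    using entry[OF _ n, of i] colW0 ev orth[OF _ n, of i] W v by simp
  define A3 where "A3 = mat m m (\<lambda>(i,j). A' $$ (Suc i, Suc j))"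
  have A3: "A3 \<in> carrier_mat m m" unfolding A3_def by simp
  define A1 where "A1 = mat 1 1 (\<lambda>_. e)"
  have A1: "A1 \<in> carrier_mat 1 1" unfolding A1_def by simp
  have blk: "A' = four_block_mat A1 (0\<^sub>m 1 m) (0\<^sub>m m 1) A3"
  proof (rule eq_matI)
    fix i j assume "i < dim_row (four_block_mat A1 (0\<^sub>m 1 m) (0\<^sub>m m 1) A3)"
      "j < dim_col (four_block_mat A1 (0\<^sub>m 1 m) (0\<^sub>m m 1) A3)"
    then have i: "i < n" and j: "j < n" using A1 A3 nm by auto
    show "A' $$ (i, j) = four_block_mat A1 (0\<^sub>m 1 m) (0\<^sub>m m 1) A3 $$ (i, j)"
    proof (cases "i = 0 \<or> j = 0")
      case True
      then show ?thesis
      proof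
        assume i0: "i = 0"
        then show ?thesis using symE[OF i j] col0[OF j] i j A1 A3 nm by (auto simp: A1_def)
      next
        assume j0: "j = 0"
        then show ?thesis using col0[OF i] i j A1 A3 nm by (auto simp: A1_def)
      qed
    next
      case False
      then obtain i' j' where "i = Suc i'" "j = Suc j'" by (cases i; cases j; auto)
      then show ?thesis using i j A1 A3 nm by (auto simp: A3_def A1_def)
    qed
  qed (use A' A1 A3 nm in auto)
  have sim: "similar_mat A' A"
    unfolding similar_mat_def
    by (rule exI[of _ "transpose_mat W"], rule exI[of _ W],
        rule similar_mat_witI[of _ _ n], insert WW WW2 A' A W WT, auto simp: A'_def assoc_mult_mat)
  have "char_poly A' = [:-e,1:] * q" using char_poly_similar[OF sim] cp by simp
  moreover have "char_poly A' = char_poly A1 * char_poly A3"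
    unfolding blk by (rule char_poly_four_block_zeros_col[OF A1 _ A3], simp)
  moreover have "char_poly A1 = [:-e,1:]"
    by (simp add: A1_def char_poly_defs det_def sign_def)
  ultimately have cp3: "char_poly A3 = q"
    by (metis mult_cancel_left pCons_eq_0_iff zero_neq_one)
  have sym3: "transpose_mat A3 = A3"
    by (rule eq_matI, insert symE nm, auto simp: A3_def)
  have vecpart: "\<exists>w \<in> carrier_vec m. w \<bullet> w = z \<bullet> z \<and> z \<bullet> (A *\<^sub>v z) = w \<bullet> (A3 *\<^sub>v w)"
    if z: "z \<in> carrier_vec n" and zv: "z \<bullet> v = 0" for z
  proof -
    define t where "t = transpose_mat W *\<^sub>v z"
    have t: "t \<in> carrier_vec n" using W unfolding t_def carrier_vec_def by simp
    have t0: "t $ 0 = 0" using n W z v colW0 zv comm_scalar_prod[OF v z] unfolding t_def by simp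
    define w where "w = vec m (\<lambda>i. t $ Suc i)"
    have w: "w \<in> carrier_vec m" unfolding w_def by simp
    have z1: "(vec 1 (\<lambda>_. 0) :: real vec) \<in> carrier_vec 1" by simp
    have tw: "t = vec 1 (\<lambda>_. 0) @\<^sub>v w"
      by (rule eq_vecI, insert t t0 nm, auto simp: w_def)
    have Wt: "W *\<^sub>v t = z" unfolding t_def using W WT z WW2
      by (simp flip: assoc_mult_mat_vec)
    have "t \<bullet> t = z \<bullet> (W *\<^sub>v t)"
      using transpose_vec_mult_scalar[OF W t z] unfolding t_def by simp
    then have tt: "t \<bullet> t = z \<bullet> z" using Wt by simp
    have Az: "A *\<^sub>v z \<in> carrier_vec n" using A z by simp
    have "z \<bullet> (A *\<^sub>v z) = (A *\<^sub>v z) \<bullet> (W *\<^sub>v t)" using Wt comm_scalar_prod[OF z Az] by simp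
    also have "\<dots> = (transpose_mat W *\<^sub>v (A *\<^sub>v z)) \<bullet> t"
      using transpose_vec_mult_scalar[OF W t Az] by simp
    also have "transpose_mat W *\<^sub>v (A *\<^sub>v z) = A' *\<^sub>v t"
      unfolding A'_def using Wt assoc_mult_mat_vec[OF WT AW t] assoc_mult_mat_vec[OF A W t] by simp
    also have "A' *\<^sub>v t = (A1 *\<^sub>v vec 1 (\<lambda>_. 0) + 0\<^sub>m 1 m *\<^sub>v w) @\<^sub>v (0\<^sub>m m 1 *\<^sub>v vec 1 (\<lambda>_. 0) + A3 *\<^sub>v w)"
      unfolding blk tw by (rule four_block_mat_mult_vec[OF A1 _ _ A3 z1 w], auto)
    also have "(A1 *\<^sub>v vec 1 (\<lambda>_. 0) + 0\<^sub>m 1 m *\<^sub>v w) = 0\<^sub>v 1"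
      by (rule eq_vecI) (use w in \<open>auto simp: A1_def scalar_prod_def\<close>)
    also have "0\<^sub>m m 1 *\<^sub>v vec 1 (\<lambda>_. 0) + A3 *\<^sub>v w = A3 *\<^sub>v w"
      by (rule eq_vecI) (use A3 w in auto)
    also have "(0\<^sub>v 1 @\<^sub>v (A3 *\<^sub>v w)) \<bullet> t = w \<bullet> (A3 *\<^sub>v w)"
    proof -
      have A3w: "A3 *\<^sub>v w \<in> carrier_vec m" using A3 w by simp
      have "(0\<^sub>v 1 @\<^sub>v (A3 *\<^sub>v w)) \<bullet> t = 0\<^sub>v 1 \<bullet> vec 1 (\<lambda>_. 0) + (A3 *\<^sub>v w) \<bullet> w"
        unfolding tw by (rule scalar_prod_append[OF _ A3w z1 w], simp)
      also have "\<dots> = w \<bullet> (A3 *\<^sub>v w)" using comm_scalar_prod[OF A3w w] by simp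
      finally show ?thesis .
    qed
    finally have "z \<bullet> (A *\<^sub>v z) = w \<bullet> (A3 *\<^sub>v w)" .
    moreover have "t \<bullet> t = w \<bullet> w"
      unfolding tw by (subst scalar_prod_append[OF z1 w z1 w]) (simp add: scalar_prod_def)
    ultimately show ?thesis using tt w by (intro bexI[of _ w]) auto
  qed
  show ?thesis using A3 sym3 cp3 vecpart unfolding m_def by blast
qed


lemma decomp:
  fixes A :: "real mat" and v z :: "real vec"
  assumes A: "A \<in> carrier_mat n n" and sym: "transpose_mat A = A"
    and v: "v \<in> carrier_vec n" and v1: "v \<bullet> v = 1" and ev: "A *\<^sub>v v = e \<cdot>\<^sub>v v"
    and z: "z \<in> carrier_vec n" and zv: "z \<bullet> v = 0"
  shows "(a \<cdot>\<^sub>v v + z) \<bullet> (A *\<^sub>v (a \<cdot>\<^sub>v v + z)) = a^2 * e + z \<bullet> (A *\<^sub>v z)"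
    and "(a \<cdot>\<^sub>v v + z) \<bullet> (a \<cdot>\<^sub>v v + z) = a^2 + z \<bullet> z"
proof -
  have Az: "A *\<^sub>v z \<in> carrier_vec n" using A z by simp
  have av: "a \<cdot>\<^sub>v v \<in> carrier_vec n" using v by simp
  have vz: "v \<bullet> z = 0" using zv comm_scalar_prod[OF v z] by simp
  have vAz: "v \<bullet> (A *\<^sub>v z) = 0"
    using transpose_vec_mult_scalar[OF A z v] sym ev v z vz by simp
  have zAv: "z \<bullet> (A *\<^sub>v v) = 0" using ev zv z v by simp
  have Aav: "A *\<^sub>v (a \<cdot>\<^sub>v v + z) = (a * e) \<cdot>\<^sub>v v + A *\<^sub>v z"
    using A v z ev by (simp add: mult_add_distrib_mat_vec[OF A av z] mult_mat_vec smult_smult_assoc)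
  have aev: "(a * e) \<cdot>\<^sub>v v \<in> carrier_vec n" using v by simp
  show "(a \<cdot>\<^sub>v v + z) \<bullet> (A *\<^sub>v (a \<cdot>\<^sub>v v + z)) = a^2 * e + z \<bullet> (A *\<^sub>v z)"
    unfolding Aav
    apply (subst add_scalar_prod_distrib[OF av z], use aev Az in simp)
    apply (subst scalar_prod_add_distrib[OF av aev Az])
    apply (subst scalar_prod_add_distrib[OF z aev Az])
    using v z vAz zv v1 smult_scalar_prod_distrib[OF v Az, of a] by (simp add: power2_eq_square)
  show "(a \<cdot>\<^sub>v v + z) \<bullet> (a \<cdot>\<^sub>v v + z) = a^2 + z \<bullet> z"
    apply (subst add_scalar_prod_distrib[OF av z], use av z in simp)
    apply (subst scalar_prod_add_distrib[OF av av z])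
    apply (subst scalar_prod_add_distrib[OF z av z])
    using v z vz zv v1 by (simp add: power2_eq_square)
qed

lemma unit_eigvec:
  fixes A :: "real mat"
  assumes A: "A \<in> carrier_mat n n" and root: "poly (char_poly A) e = 0"
  shows "\<exists>v \<in> carrier_vec n. v \<bullet> v = 1 \<and> A *\<^sub>v v = e \<cdot>\<^sub>v v"
proof -
  have "eigenvalue A e" using eigenvalue_root_char_poly[OF A] root by simp
  then obtain u where "eigenvector A u e" unfolding eigenvalue_def by blast
  then have u: "u \<in> carrier_vec n" and u0: "u \<noteq> 0\<^sub>v n" and Au: "A *\<^sub>v u = e \<cdot>\<^sub>v u"
    unfolding eigenvector_def using A by auto
  have up: "u \<bullet> u > 0" using sq_eq0[OF u] sq_ge0[of u] u0 by (simp add: less_le)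
  define v where "v = (1 / sqrt (u \<bullet> u)) \<cdot>\<^sub>v u"
  have v: "v \<in> carrier_vec n" using u by (simp add: v_def)
  have "v \<bullet> v = 1" using u up by (simp add: v_def)
  moreover have "A *\<^sub>v v = e \<cdot>\<^sub>v v"
    using A u Au by (simp add: v_def mult_mat_vec smult_smult_assoc mult.commute)
  ultimately show ?thesis using v by blast
qed

lemma quad_bound:
  "\<forall>n A. (A :: real mat) \<in> carrier_mat n n \<longrightarrow> transpose_mat A = A \<longrightarrow>
     char_poly A = (\<Prod>e\<leftarrow>es. [:-e,1:]) \<longrightarrow> (\<forall>x\<in>set es. x \<le> c) \<longrightarrow>
     (\<forall>y\<in>carrier_vec n. y \<bullet> (A *\<^sub>v y) \<le> c * (y \<bullet> y))"
proof (induction es)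
  case Nil
  show ?case
  proof (intro allI impI ballI)
    fix n and A :: "real mat" and y :: "real vec"
    assume A: "A \<in> carrier_mat n n" and cp: "char_poly A = (\<Prod>e\<leftarrow>[]. [:-e,1:])" and y: "y \<in> carrier_vec n"
    have "n = 0" using degree_monic_char_poly[OF A] cp by simp
    then show "y \<bullet> (A *\<^sub>v y) \<le> c * (y \<bullet> y)" using y by (simp add: scalar_prod_def)
  qed
next
  case (Cons e es)
  show ?case
  proof (intro allI impI ballI)
    fix n and A :: "real mat" and y :: "real vec"
    assume A: "A \<in> carrier_mat n n" and sym: "transpose_mat A = A"
      and cp: "char_poly A = (\<Prod>e\<leftarrow>e # es. [:-e,1:])" and les: "\<forall>x\<in>set (e # es). x \<le> c"
      and y: "y \<in> carrier_vec n"
    have cp': "char_poly A = [:-e,1:] * (\<Prod>e\<leftarrow>es. [:-e,1:])" using cp by simp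
    have "poly (char_poly A) e = 0" unfolding cp' by simp
    from unit_eigvec[OF A this] obtain v where v: "v \<in> carrier_vec n" and v1: "v \<bullet> v = 1"
      and ev: "A *\<^sub>v v = e \<cdot>\<^sub>v v" by blast
    from compress[OF A sym v v1 ev cp'] obtain A3 where A3: "A3 \<in> carrier_mat (n-1) (n-1)"
      and sym3: "transpose_mat A3 = A3" and cp3: "char_poly A3 = (\<Prod>e\<leftarrow>es. [:-e,1:])"
      and vp: "\<forall>z\<in>carrier_vec n. z \<bullet> v = 0 \<longrightarrow> (\<exists>w \<in> carrier_vec (n-1). w \<bullet> w = z \<bullet> z \<and> z \<bullet> (A *\<^sub>v z) = w \<bullet> (A3 *\<^sub>v w))"
      by blast
    have IH: "\<forall>w\<in>carrier_vec (n-1). w \<bullet> (A3 *\<^sub>v w) \<le> c * (w \<bullet> w)"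
      using Cons.IH A3 sym3 cp3 les by simp
    define a where "a = y \<bullet> v"
    define z where "z = y - a \<cdot>\<^sub>v v"
    have z: "z \<in> carrier_vec n" using y v by (simp add: z_def)
    have zv: "z \<bullet> v = 0" unfolding z_def a_def
      using y v v1 by (simp add: minus_scalar_prod_distrib)
    have yz: "y = a \<cdot>\<^sub>v v + z" unfolding z_def using y v by auto
    obtain w where w: "w \<in> carrier_vec (n-1)" "w \<bullet> w = z \<bullet> z" "z \<bullet> (A *\<^sub>v z) = w \<bullet> (A3 *\<^sub>v w)"
      using vp z zv by blast
    have zb: "z \<bullet> (A *\<^sub>v z) \<le> c * (z \<bullet> z)" using IH w by metis
    have ec: "e \<le> c" using les by simp
    have "a^2 * e \<le> a^2 * c" using ec by (simp add: mult_left_mono)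
    then show "y \<bullet> (A *\<^sub>v y) \<le> c * (y \<bullet> y)"
      unfolding yz decomp[OF A sym v v1 ev z zv] using zb by (simp add: algebra_simps)
  qed
qed

lemma top_eig:
  fixes M :: "real mat"
  assumes M: "M \<in> carrier_mat n n" and sym: "transpose_mat M = M"
    and cp: "char_poly M = [:-l0,1:] * (\<Prod>e\<leftarrow>es. [:-e,1:])" and les: "\<forall>x\<in>set es. x \<le> c"
  shows "\<exists>v \<in> carrier_vec n. v \<bullet> v = 1 \<and> M *\<^sub>v v = l0 \<cdot>\<^sub>v v \<and>
           (\<forall>z\<in>carrier_vec n. z \<bullet> v = 0 \<longrightarrow> z \<bullet> (M *\<^sub>v z) \<le> c * (z \<bullet> z))"
proof -
  have "poly (char_poly M) l0 = 0" unfolding cp by simp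
  from unit_eigvec[OF M this] obtain v where v: "v \<in> carrier_vec n" and v1: "v \<bullet> v = 1"
    and ev: "M *\<^sub>v v = l0 \<cdot>\<^sub>v v" by blast
  from compress[OF M sym v v1 ev cp] obtain A3 where A3: "A3 \<in> carrier_mat (n-1) (n-1)"
    and sym3: "transpose_mat A3 = A3" and cp3: "char_poly A3 = (\<Prod>e\<leftarrow>es. [:-e,1:])"
    and vp: "\<forall>z\<in>carrier_vec n. z \<bullet> v = 0 \<longrightarrow> (\<exists>w \<in> carrier_vec (n-1). w \<bullet> w = z \<bullet> z \<and> z \<bullet> (M *\<^sub>v z) = w \<bullet> (A3 *\<^sub>v w))"
    by blast
  have IH: "\<forall>w\<in>carrier_vec (n-1). w \<bullet> (A3 *\<^sub>v w) \<le> c * (w \<bullet> w)"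
    using quad_bound[of es c] A3 sym3 cp3 les by simp
  have "\<forall>z\<in>carrier_vec n. z \<bullet> v = 0 \<longrightarrow> z \<bullet> (M *\<^sub>v z) \<le> c * (z \<bullet> z)"
    using vp IH by metis
  then show ?thesis using v v1 ev by blast
qed


lemma outer_mult:
  fixes x w :: "real vec"
  assumes x: "x \<in> carrier_vec n" and w: "w \<in> carrier_vec n"
  shows "outer_vec x *\<^sub>v w = (x \<bullet> w) \<cdot>\<^sub>v x"
proof (rule eq_vecI)
  fix i assume "i < dim_vec ((x \<bullet> w) \<cdot>\<^sub>v x)"
  then have i: "i < n" using x by simp
  have "(outer_vec x *\<^sub>v w) $ i = (\<Sum>j<n. x $ i * x $ j * w $ j)"
    using x w i by (simp add: outer_vec_def scalar_prod_def row_def lessThan_atLeast0)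
  also have "\<dots> = x $ i * (\<Sum>j<n. x $ j * w $ j)" by (simp add: sum_distrib_left mult.assoc)
  also have "\<dots> = ((x \<bullet> w) \<cdot>\<^sub>v x) $ i" using x w i by (simp add: scalar_prod_def lessThan_atLeast0)
  finally show "(outer_vec x *\<^sub>v w) $ i = ((x \<bullet> w) \<cdot>\<^sub>v x) $ i" .
qed (use x in \<open>simp add: outer_vec_def\<close>)

lemma outer_carrier: "x \<in> carrier_vec n \<Longrightarrow> outer_vec x \<in> carrier_mat n n"
  by (simp add: outer_vec_def)

lemma Pmult:
  fixes x w :: "real vec"
  assumes x: "x \<in> carrier_vec n" and w: "w \<in> carrier_vec n"
  shows "(1\<^sub>m n - outer_vec x) *\<^sub>v w = w - (x \<bullet> w) \<cdot>\<^sub>v x"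
  using minus_mult_distrib_mat_vec[OF one_carrier_mat outer_carrier[OF x] w] outer_mult[OF x w] w
  by simp

lemma grad_formula:
  fixes M :: "real mat" and x :: "real vec"
  assumes M: "M \<in> carrier_mat n n" and x: "x \<in> carrier_vec n"
  shows "sphere_grad M x = (x \<bullet> (M *\<^sub>v x)) \<cdot>\<^sub>v x - M *\<^sub>v x"
proof -
  have Mx: "M *\<^sub>v x \<in> carrier_vec n" using M x by simp
  have "sphere_grad M x = outer_vec x *\<^sub>v (M *\<^sub>v x) - 1\<^sub>m n *\<^sub>v (M *\<^sub>v x)"
    unfolding sphere_grad_def using x minus_mult_distrib_mat_vec[OF outer_carrier[OF x] one_carrier_mat Mx] by simp
  then show ?thesis using outer_mult[OF x Mx] Mx by simp
qed

lemma hess_quad: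
  fixes M :: "real mat" and x u :: "real vec"
  assumes M: "M \<in> carrier_mat n n" and x: "x \<in> carrier_vec n" and u: "u \<in> carrier_vec n"
    and xu: "x \<bullet> u = 0"
  shows "u \<bullet> (sphere_hess M x *\<^sub>v u) = (x \<bullet> (M *\<^sub>v x)) * (u \<bullet> u) - u \<bullet> (M *\<^sub>v u)"
proof -
  define r where "r = x \<bullet> (M *\<^sub>v x)"
  define P where "P = 1\<^sub>m n - outer_vec x"
  define B where "B = r \<cdot>\<^sub>m 1\<^sub>m n - M"
  have P: "P \<in> carrier_mat n n" unfolding P_def using outer_carrier[OF x] by (rule minus_carrier_mat)
  have B: "B \<in> carrier_mat n n" unfolding B_def using M by (rule minus_carrier_mat)
  have H: "sphere_hess M x = P * B * P" using x unfolding sphere_hess_def P_def B_def r_def Let_def by simp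
  have u0x: "u - 0 \<cdot>\<^sub>v x = u" by (rule eq_vecI) (use u x in auto)
  have Pu: "P *\<^sub>v u = u" unfolding P_def using Pmult[OF x u] xu u0x by simp
  have rI: "(r \<cdot>\<^sub>m 1\<^sub>m n) *\<^sub>v u = r \<cdot>\<^sub>v u"
  proof (rule eq_vecI)
    fix i assume "i < dim_vec (r \<cdot>\<^sub>v u)"
    then have i: "i < n" using u by simp
    have "row (r \<cdot>\<^sub>m 1\<^sub>m n) i = r \<cdot>\<^sub>v unit_vec n i" by (rule eq_vecI) (use i in auto)
    then show "((r \<cdot>\<^sub>m 1\<^sub>m n) *\<^sub>v u) $ i = (r \<cdot>\<^sub>v u) $ i" using i u by simp
  qed (use u in simp)
  have Bu: "B *\<^sub>v u = r \<cdot>\<^sub>v u - M *\<^sub>v u" unfolding B_def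
    using minus_mult_distrib_mat_vec[of "r \<cdot>\<^sub>m 1\<^sub>m n" n n M u] M u rI by simp
  have Buc: "B *\<^sub>v u \<in> carrier_vec n" using B u by simp
  have Mu: "M *\<^sub>v u \<in> carrier_vec n" using M u by simp
  have "sphere_hess M x *\<^sub>v u = P *\<^sub>v (B *\<^sub>v (P *\<^sub>v u))"
    unfolding H using P B u assoc_mult_mat_vec[OF P B u] assoc_mult_mat_vec[OF mult_carrier_mat[OF P B] P u] by simp
  also have "\<dots> = B *\<^sub>v u - (x \<bullet> (B *\<^sub>v u)) \<cdot>\<^sub>v x" using Pu Pmult[OF x Buc] unfolding P_def by simp
  finally have "u \<bullet> (sphere_hess M x *\<^sub>v u) = u \<bullet> (B *\<^sub>v u) - (x \<bullet> (B *\<^sub>v u)) * (u \<bullet> x)"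
    using u x Buc by (simp add: scalar_prod_minus_distrib)
  also have "u \<bullet> x = 0" using xu comm_scalar_prod[OF x u] by simp
  finally show ?thesis unfolding Bu r_def[symmetric] using u Mu by (simp add: scalar_prod_minus_distrib)
qed

lemma cross:
  fixes v z y :: "real vec"
  assumes v: "v \<in> carrier_vec n" and z: "z \<in> carrier_vec n" and y: "y \<in> carrier_vec n"
    and v1: "v \<bullet> v = 1" and zv: "z \<bullet> v = 0" and yv: "y \<bullet> v = 0"
  shows "(a \<cdot>\<^sub>v v + z) \<bullet> (b \<cdot>\<^sub>v v + y) = a * b + z \<bullet> y"
proof -
  have av: "a \<cdot>\<^sub>v v \<in> carrier_vec n" and bv: "b \<cdot>\<^sub>v v \<in> carrier_vec n" using v by auto
  have vy: "v \<bullet> y = 0" using yv comm_scalar_prod[OF v y] by simp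
  show ?thesis
    apply (subst add_scalar_prod_distrib[OF av z], use bv y in simp)
    apply (subst scalar_prod_add_distrib[OF av bv y])
    apply (subst scalar_prod_add_distrib[OF z bv y])
    using v z y vy zv v1 by simp
qed

lemma exists_orth:
  fixes x :: "real vec"
  assumes N: "2 \<le> N" and x: "x \<in> carrier_vec N"
  shows "\<exists>u \<in> carrier_vec N. x \<bullet> u = 0 \<and> u \<bullet> u = 1"
proof (cases "x $ 0 = 0 \<and> x $ 1 = 0")
  case True
  have "unit_vec N 0 \<in> carrier_vec N" by simp
  moreover have "x \<bullet> unit_vec N 0 = 0" using True N by simp
  moreover have "unit_vec N 0 \<bullet> unit_vec N 0 = (1::real)" using N by simp
  ultimately show ?thesis by blast
next
  case False
  define p where "p = x $ 1 \<cdot>\<^sub>v unit_vec N 0 - x $ 0 \<cdot>\<^sub>v unit_vec N 1"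
  have p: "p \<in> carrier_vec N" unfolding p_def by simp
  have xp: "x \<bullet> p = 0" unfolding p_def using N x
    by (simp add: scalar_prod_minus_distrib[of _ N] mult.commute)
  have p0: "p $ 0 = x $ 1" "p $ 1 = - x $ 0" unfolding p_def using N by auto
  have "p \<noteq> 0\<^sub>v N"
  proof
    assume "p = 0\<^sub>v N"
    then have "p $ 0 = 0" "p $ 1 = 0" using N by auto
    then show False using p0 False by auto
  qed
  then have pp: "p \<bullet> p > 0" using sq_eq0[OF p] sq_ge0[of p] by (simp add: less_le)
  define u where "u = (1 / sqrt (p \<bullet> p)) \<cdot>\<^sub>v p"
  have "u \<in> carrier_vec N" using p by (simp add: u_def)
  moreover have "x \<bullet> u = 0" using xp x p by (simp add: u_def)
  moreover have "u \<bullet> u = 1" using pp p by (simp add: u_def)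
  ultimately show ?thesis by blast
qed

lemma cp_split:
  fixes lam :: "nat \<Rightarrow> real"
  assumes "1 \<le> N"
  shows "(\<Prod>i<N. [:- lam i, 1:]) = [:- lam 0, 1:] * (\<Prod>e\<leftarrow>map lam [1..<N]. [:-e,1:])"
proof -
  have "(\<Prod>i<N. [:- lam i, 1:]) = (\<Prod>i\<in>{0..<N}. [:- lam i, 1:])" by (simp add: lessThan_atLeast0)
  also have "\<dots> = [:- lam 0, 1:] * (\<Prod>i\<in>{1..<N}. [:- lam i, 1:])"
    using assms by (simp add: prod.atLeast_Suc_lessThan)
  also have "(\<Prod>i\<in>{1..<N}. [:- lam i, 1:]) = (\<Prod>i\<leftarrow>[1..<N]. [:- lam i, 1:])"
    by (subst prod.distinct_set_conv_list[symmetric]) auto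
  also have "\<dots> = (\<Prod>e\<leftarrow>map lam [1..<N]. [:-e,1:])" by (simp add: o_def)
  finally show ?thesis .
qed


lemma arith_B:
  fixes D d c :: real
  assumes h1: "0 \<le> (D - d / 2) * (1 - 2 * c\<^sup>2)" and h2: "d * c\<^sup>2 \<le> d * (4 / 25)" and "0 < d"
  shows "0.3 * d * (1 - c\<^sup>2) \<le> D * (1 - 2 * c\<^sup>2)"
proof -
  have e: "D * (1 - 2 * c\<^sup>2) - 0.3 * d * (1 - c\<^sup>2) = (D - d / 2) * (1 - 2 * c\<^sup>2) + (0.2 * d - 0.7 * (d * c\<^sup>2))"
    by (simp add: field_simps)
  have "0 \<le> 0.2 * d - 0.7 * (d * c\<^sup>2)" using h2 \<open>0 < d\<close> by simp
  then have "0 \<le> D * (1 - 2 * c\<^sup>2) - 0.3 * d * (1 - c\<^sup>2)" unfolding e using h1 by simp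
  then show ?thesis by simp
qed



theorem theorem1:
  fixes N :: nat and M :: "real mat" and lam :: "nat \<Rightarrow> real" and x :: "real vec"
  assumes "N \<ge> 2"
    and "M \<in> carrier_mat N N" and "transpose_mat M = M"
    and "char_poly M = (\<Prod>i<N. [:- lam i, 1:])"
    and "lam 0 > lam 1"
    and "\<And>i j. 1 \<le> i \<Longrightarrow> i \<le> j \<Longrightarrow> j < N \<Longrightarrow> lam j \<le> lam i"
    and "x \<in> carrier_vec N" and "vnorm x = 1"
    and "vnorm (sphere_grad M x) \<le> 0.2 * (lam 0 - lam 1)"
  shows "\<bar>lambda_min_hess M x\<bar> \<ge> 0.3 * (lam 0 - lam 1)"
proof -
  note N = assms(1) and M = assms(2) and sym = assms(3) and x = assms(7)
  define d where "d = lam 0 - lam 1"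
  have dpos: "d > 0" using assms(5) by (simp add: d_def)
  have cp: "char_poly M = [:-lam 0,1:] * (\<Prod>e\<leftarrow>map lam [1..<N]. [:-e,1:])"
    using assms(4) cp_split[of N lam] N by simp
  have les: "\<forall>e\<in>set (map lam [1..<N]). e \<le> lam 1" using assms(6) by auto
  obtain v where v: "v \<in> carrier_vec N" and vv: "v \<bullet> v = 1" and ev: "M *\<^sub>v v = lam 0 \<cdot>\<^sub>v v"
    and P2: "\<forall>z\<in>carrier_vec N. z \<bullet> v = 0 \<longrightarrow> z \<bullet> (M *\<^sub>v z) \<le> lam 1 * (z \<bullet> z)"
    using top_eig[OF M sym cp les] by blast
  have xx: "x \<bullet> x = 1" using assms(8) unfolding vnorm_def by simp
  define r where "r = x \<bullet> (M *\<^sub>v x)"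
  have Mx: "M *\<^sub>v x \<in> carrier_vec N" using M x by simp
  define g where "g = sphere_grad M x"
  have g_eq: "g = r \<cdot>\<^sub>v x - M *\<^sub>v x" unfolding g_def r_def using grad_formula[OF M x] .
  have g: "g \<in> carrier_vec N" using g_eq x Mx by simp
  have gg: "g \<bullet> g \<le> (0.2 * d)^2"
  proof -
    have "sqrt (g \<bullet> g) \<le> 0.2 * d" using assms(9) unfolding vnorm_def g_def d_def .
    moreover have "0 \<le> sqrt (g \<bullet> g)" using sq_ge0[of g] by simp
    ultimately have "(sqrt (g \<bullet> g))^2 \<le> (0.2 * d)^2" by (rule power_mono)
    moreover have "(sqrt (g \<bullet> g))^2 = g \<bullet> g" by (rule real_sqrt_pow2[OF sq_ge0])
    ultimately show ?thesis by simp
  qed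
  have vxsym: "(M *\<^sub>v w) \<bullet> v = lam 0 * (w \<bullet> v)" if w: "w \<in> carrier_vec N" for w
    using transpose_vec_mult_scalar[OF M v w] sym ev w v by simp
  have symw: "(M *\<^sub>v a) \<bullet> b = a \<bullet> (M *\<^sub>v b)" if a: "a \<in> carrier_vec N" and b: "b \<in> carrier_vec N" for a b
    using transpose_vec_mult_scalar[OF M b a] sym by simp
  have umv: "u \<bullet> (M *\<^sub>v u) \<le> lam 1 + d * (u \<bullet> v)^2 \<and> (u \<bullet> v)^2 \<le> 1"
    if u: "u \<in> carrier_vec N" and uu: "u \<bullet> u = 1" for u
  proof -
    define a where "a = u \<bullet> v"
    define z where "z = u - a \<cdot>\<^sub>v v"
    have z: "z \<in> carrier_vec N" using u v by (simp add: z_def)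
    have zv: "z \<bullet> v = 0" unfolding z_def a_def using u v vv by (simp add: minus_scalar_prod_distrib)
    have uz: "u = a \<cdot>\<^sub>v v + z" unfolding z_def using u v by auto
    have q: "u \<bullet> (M *\<^sub>v u) = a^2 * lam 0 + z \<bullet> (M *\<^sub>v z)" and n: "u \<bullet> u = a^2 + z \<bullet> z"
      using decomp[OF M sym v vv ev z zv, of a] uz by auto
    have zz: "z \<bullet> z = 1 - a^2" using n uu by simp
    have "z \<bullet> (M *\<^sub>v z) \<le> lam 1 * (z \<bullet> z)" using P2 z zv by blast
    then have "z \<bullet> (M *\<^sub>v z) \<le> lam 1 * (1 - a^2)" unfolding zz .
    moreover have "z \<bullet> z \<ge> 0" by (rule sq_ge0)
    ultimately show ?thesis using q zz unfolding a_def[symmetric] d_def by (auto simp: algebra_simps)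
  qed
  define S where "S = {u \<bullet> (sphere_hess M x *\<^sub>v u) | u. u \<in> carrier_vec (dim_vec x) \<and> x \<bullet> u = 0 \<and> u \<bullet> u = 1}"
  have lm: "lambda_min_hess M x = Inf S" unfolding lambda_min_hess_def S_def ..
  have dimx: "dim_vec x = N" using x by simp
  have elem: "u \<bullet> (sphere_hess M x *\<^sub>v u) = r - u \<bullet> (M *\<^sub>v u)"
    if "u \<in> carrier_vec N" "x \<bullet> u = 0" "u \<bullet> u = 1" for u
    using hess_quad[OF M x that(1,2)] that(3) unfolding r_def by simp
  have bdd: "bdd_below S"
  proof
    fix s assume "s \<in> S"
    then obtain u where u: "u \<in> carrier_vec N" "x \<bullet> u = 0" "u \<bullet> u = 1" and s: "s = u \<bullet> (sphere_hess M x *\<^sub>v u)"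
      unfolding S_def dimx by blast
    have "u \<bullet> (M *\<^sub>v u) \<le> lam 0"
    proof -
      have "u \<bullet> (M *\<^sub>v u) \<le> lam 1 + d * (u \<bullet> v)^2" "(u \<bullet> v)^2 \<le> 1" using umv u by auto
      moreover have "d * (u \<bullet> v)^2 \<le> d * 1" using calculation(2) dpos by (intro mult_left_mono) auto
      ultimately show ?thesis unfolding d_def by simp
    qed
    then show "r - lam 0 \<le> s" using s elem[OF u] by simp
  qed
  define c where "c = x \<bullet> v"
  define y where "y = x - c \<cdot>\<^sub>v v"
  have y: "y \<in> carrier_vec N" using x v by (simp add: y_def)
  have yv: "y \<bullet> v = 0" unfolding y_def c_def using x v vv by (simp add: minus_scalar_prod_distrib)
  have xcy: "x = c \<cdot>\<^sub>v v + y" unfolding y_def using x v by auto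
  have yy: "1 = c^2 + y \<bullet> y" using cross[OF v y y vv yv yv, of c c] xcy xx by (simp add: power2_eq_square)
  have yy0: "y \<bullet> y \<ge> 0" by (rule sq_ge0)
  have vy: "v \<bullet> y = 0" using yv comm_scalar_prod[OF v y] by simp
  show ?thesis
  proof (cases "r - lam 1 \<ge> d / 2")
    case True
    define t where "t = r - lam 1"
    have My: "M *\<^sub>v y \<in> carrier_vec N" using M y by simp
    have xy: "x \<bullet> y = y \<bullet> y" unfolding xcy
      using add_scalar_prod_distrib[of "c \<cdot>\<^sub>v v" N y y] v y vy by simp
    have vMy: "v \<bullet> (M *\<^sub>v y) = 0" using symw[OF v y] ev v y vy by simp
    have xMy: "x \<bullet> (M *\<^sub>v y) = y \<bullet> (M *\<^sub>v y)" unfolding xcy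
      using add_scalar_prod_distrib[of "c \<cdot>\<^sub>v v" N y "M *\<^sub>v y"] v y My vMy by simp
    have gy: "g \<bullet> y = r * (y \<bullet> y) - y \<bullet> (M *\<^sub>v y)"
      unfolding g_eq using minus_scalar_prod_distrib[of "r \<cdot>\<^sub>v x" N "M *\<^sub>v x" y] x Mx y xy symw[OF x y] xMy
      by simp
    have yMy: "y \<bullet> (M *\<^sub>v y) \<le> lam 1 * (y \<bullet> y)" using P2 y yv by blast
    have gy2: "g \<bullet> y \<ge> t * (y \<bullet> y)" using gy yMy unfolding t_def by (simp add: algebra_simps)
    have tpos: "t \<ge> d/2" using True t_def by simp
    have cs: "(g \<bullet> y)^2 \<le> (g \<bullet> g) * (y \<bullet> y)" by (rule cauchy_schwarz[OF g y])
    have ty: "t^2 * (y \<bullet> y) \<le> (0.2 * d)^2"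
    proof (cases "y \<bullet> y = 0")
      case True then show ?thesis by simp
    next
      case False
      then have ypos: "y \<bullet> y > 0" using yy0 by simp
      have "0 \<le> t * (y \<bullet> y)" using tpos dpos yy0 by simp
      then have "(t * (y \<bullet> y))^2 \<le> (g \<bullet> y)^2" using gy2 by (intro power_mono) auto
      also have "\<dots> \<le> (g \<bullet> g) * (y \<bullet> y)" by (rule cs)
      also have "\<dots> \<le> (0.2 * d)^2 * (y \<bullet> y)" using gg yy0 by (intro mult_right_mono)
      finally have "(t^2 * (y \<bullet> y)) * (y \<bullet> y) \<le> (0.2 * d)^2 * (y \<bullet> y)" by (simp add: power2_eq_square algebra_simps)
      then show ?thesis using ypos by simp
    qed
    have ysmall: "y \<bullet> y \<le> 0.16"
    proof -
      have "(d/2)^2 \<le> t^2" using tpos dpos by (intro power_mono) auto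
      then have "(d/2)^2 * (y \<bullet> y) \<le> t^2 * (y \<bullet> y)" using yy0 by (intro mult_right_mono)
      with ty have "(d/2)^2 * (y \<bullet> y) \<le> (0.2 * d)^2" by simp
      then have "d^2 * (y \<bullet> y) \<le> d^2 * 0.16" by (simp add: power2_eq_square algebra_simps)
      then show ?thesis using dpos by simp
    qed
    have lower: "0.3 * d \<le> s" if "s \<in> S" for s
    proof -
      from that obtain u where u: "u \<in> carrier_vec N" "x \<bullet> u = 0" "u \<bullet> u = 1" and s: "s = u \<bullet> (sphere_hess M x *\<^sub>v u)"
        unfolding S_def dimx by blast
      define a where "a = u \<bullet> v"
      define z where "z = u - a \<cdot>\<^sub>v v"
      have z: "z \<in> carrier_vec N" using u v by (simp add: z_def)
      have zv: "z \<bullet> v = 0" unfolding z_def a_def using u v vv by (simp add: minus_scalar_prod_distrib)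
      have uz: "u = a \<cdot>\<^sub>v v + z" unfolding z_def using u v by auto
      have zz: "1 = a^2 + z \<bullet> z" using cross[OF v z z vv zv zv, of a a] uz u by (simp add: power2_eq_square)
      have "0 = c * a + y \<bullet> z" using cross[OF v y z vv yv zv, of c a] xcy uz u by simp
      then have "c * a = - (y \<bullet> z)" by linarith
      then have "(c * a)^2 = (y \<bullet> z)^2" by simp
      also have "\<dots> \<le> (y \<bullet> y) * (z \<bullet> z)" by (rule cauchy_schwarz[OF y z])
      moreover have zz': "z \<bullet> z = 1 - a^2" using zz by simp
      ultimately have "c^2 * a^2 \<le> (y \<bullet> y) * (1 - a^2)" by (simp add: power_mult_distrib)
      moreover have "c^2 = 1 - y \<bullet> y" using yy by simp
      ultimately have "(1 - y \<bullet> y) * a^2 \<le> (y \<bullet> y) * (1 - a^2)" by simp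
      then have a2: "a^2 \<le> y \<bullet> y" by (simp add: algebra_simps)
      have "u \<bullet> (M *\<^sub>v u) \<le> lam 1 + d * a^2" using umv[OF u(1,3)] unfolding a_def by simp
      also have "\<dots> \<le> lam 1 + d * 0.16" using a2 ysmall dpos by (simp add: mult_left_mono)
      finally have "u \<bullet> (M *\<^sub>v u) \<le> lam 1 + d * 0.16" .
      then show ?thesis using s elem[OF u] tpos t_def dpos by simp
    qed
    obtain u0 where "u0 \<in> carrier_vec N" "x \<bullet> u0 = 0" "u0 \<bullet> u0 = 1" using exists_orth[OF N x] by blast
    then have ne: "S \<noteq> {}" unfolding S_def dimx by blast
    have "0.3 * d \<le> Inf S" by (rule cInf_greatest[OF ne lower])
    then show ?thesis unfolding lm d_def by simp
  next
    case False
    define D where "D = lam 0 - r"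
    have Dpos: "D > d/2" using False unfolding D_def d_def by simp
    have gv: "g \<bullet> v = - c * D"
      unfolding g_eq using minus_scalar_prod_distrib[of "r \<cdot>\<^sub>v x" N "M *\<^sub>v x" v] x Mx v vxsym[OF x]
      unfolding c_def D_def by (simp add: algebra_simps)
    have "(g \<bullet> v)^2 \<le> (g \<bullet> g) * (v \<bullet> v)" by (rule cauchy_schwarz[OF g v])
    then have cD: "c^2 * D^2 \<le> (0.2 * d)^2" using gv vv gg by (simp add: power_mult_distrib)
    have csmall: "c^2 \<le> 0.16"
    proof -
      have "(d/2)^2 \<le> D^2" using Dpos dpos by (intro power_mono) auto
      then have "(d/2)^2 * c^2 \<le> D^2 * c^2" by (intro mult_right_mono) auto
      with cD have "(d/2)^2 * c^2 \<le> (0.2 * d)^2" by (simp add: mult.commute)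
      then have "d^2 * c^2 \<le> d^2 * 0.16" by (simp add: power2_eq_square algebra_simps)
      then show ?thesis using dpos by simp
    qed
    define w where "w = v - c \<cdot>\<^sub>v x"
    have cx: "c \<cdot>\<^sub>v x \<in> carrier_vec N" using x by simp
    have w: "w \<in> carrier_vec N" using v x by (simp add: w_def)
    have xv: "x \<bullet> v = c" unfolding c_def ..
    have vx: "v \<bullet> x = c" using comm_scalar_prod[OF v x] xv by simp
    have ww: "w \<bullet> w = 1 - c^2" unfolding w_def
      using minus_scalar_prod_distrib[OF v cx w[unfolded w_def]] scalar_prod_minus_distrib[OF v v cx]
        scalar_prod_minus_distrib[OF cx v cx] v x vv xx vx xv
      by (simp add: power2_eq_square)
    have Mw: "M *\<^sub>v w = lam 0 \<cdot>\<^sub>v v - c \<cdot>\<^sub>v (M *\<^sub>v x)"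
      unfolding w_def using mult_minus_distrib_mat_vec[OF M v cx] mult_mat_vec[OF M x] ev by simp
    have lv: "lam 0 \<cdot>\<^sub>v v \<in> carrier_vec N" and cMx: "c \<cdot>\<^sub>v (M *\<^sub>v x) \<in> carrier_vec N" using v Mx by auto
    have vMx: "v \<bullet> (M *\<^sub>v x) = lam 0 * c" using vxsym[OF x] symw[OF x v] comm_scalar_prod[OF v Mx] xv
      by (metis comm_scalar_prod[OF Mx v])
    have wMw0: "w \<bullet> (M *\<^sub>v w) = (v - c \<cdot>\<^sub>v x) \<bullet> (lam 0 \<cdot>\<^sub>v v - c \<cdot>\<^sub>v (M *\<^sub>v x))"
      unfolding Mw by (simp only: w_def)
    have wMw: "w \<bullet> (M *\<^sub>v w) = lam 0 - 2 * c^2 * lam 0 + c^2 * r"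
      unfolding wMw0
      using minus_scalar_prod_distrib[OF v cx, of "lam 0 \<cdot>\<^sub>v v - c \<cdot>\<^sub>v (M *\<^sub>v x)"]
        scalar_prod_minus_distrib[OF v lv cMx] scalar_prod_minus_distrib[OF cx lv cMx]
        v x Mx vv xv vMx lv cMx unfolding r_def
      by (simp add: power2_eq_square algebra_simps)
    have xw: "x \<bullet> w = 0" unfolding w_def using scalar_prod_minus_distrib[OF x v cx] x v xx xv by simp
    have a1: "1 - c^2 > 0" using csmall by simp
    define u where "u = (1 / sqrt (1 - c^2)) \<cdot>\<^sub>v w"
    have u: "u \<in> carrier_vec N" using w by (simp add: u_def)
    have xu: "x \<bullet> u = 0" using xw x w by (simp add: u_def)
    have uu: "u \<bullet> u = 1" using ww w a1 by (simp add: u_def)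
    have uMu: "u \<bullet> (M *\<^sub>v u) = (lam 0 - 2 * c^2 * lam 0 + c^2 * r) / (1 - c^2)"
      using wMw w a1 M by (simp add: u_def mult_mat_vec[OF M w])
    have inS: "r - u \<bullet> (M *\<^sub>v u) \<in> S" unfolding S_def dimx using elem[OF u xu uu] u xu uu by force
    have val: "r - u \<bullet> (M *\<^sub>v u) \<le> - 0.3 * d"
    proof -
      have e1: "r - u \<bullet> (M *\<^sub>v u) = - D * (1 - 2 * c^2) / (1 - c^2)"
        unfolding uMu D_def using a1 by (simp add: field_simps)
      have "(D - d/2) * (1 - 2 * c^2) \<ge> 0" using Dpos csmall by simp
      moreover have "d * c^2 \<le> d * (4/25)" using csmall dpos by (intro mult_left_mono) auto
      ultimately have "D * (1 - 2 * c^2) \<ge> 0.3 * d * (1 - c^2)" using dpos by (rule arith_B)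
      then show ?thesis unfolding e1 using a1 by (simp add: field_simps)
    qed
    have "Inf S \<le> - 0.3 * d" using cInf_lower[OF inS bdd] val by simp
    then have "0.3 * d \<le> \<bar>Inf S\<bar>" by linarith
    then show ?thesis unfolding lm d_def .
  qed
qed

end
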